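(* If $G$ and $H$ are finite simple graphs without isolated vertices that are both efficient open domination graphs, then $\gamma_{tR}(G\times H)\le 2\rho_o(G)\rho_o(H)$.
   Context: An open packing of $G$ is a set $D$ of vertices with $N(u)\cap N(v)=\emptyset$ for all distinct $u,v\in D$ (open neighborhoods); $\rho_o(G)$ is the maximum size of an open packing. A set $D$ is total dominating if every vertex of $G$ has a neighbor in $D$. $G$ is an efficient open domination graph if it has a total dominating set that is also an open packing. A total Roman dominating function on $G$ is a map $f:V(G)\to\{0,1,2\}$ such that every vertex with label 0 has a neighbor with label 2 and the subgraph induced by vertices with positive labels has no isolated vertices; $\gamma_{tR}(G)$ is the minimum of $\sum_v f(v)$ over such $f$. The direct product $G\times H$ has vertex set $V(G)\times V(H)$, with $(g,h)(g',h')$ an edge iff $gg'\in E(G)$ and $hh'\in E(H)$. *)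

theory Defs
  imports Main
begin

definition simple_graph :: "'a set \<Rightarrow> ('a \<Rightarrow> 'a \<Rightarrow> bool) \<Rightarrow> bool" where
  "simple_graph V E \<longleftrightarrow> finite V \<and> (\<forall>u v. E u v \<longrightarrow> u \<in> V \<and> v \<in> V)
      \<and> (\<forall>u v. E u v \<longrightarrow> E v u) \<and> (\<forall>v. \<not> E v v)"

definition open_nbhd :: "'a set \<Rightarrow> ('a \<Rightarrow> 'a \<Rightarrow> bool) \<Rightarrow> 'a \<Rightarrow> 'a set" where
  "open_nbhd V E v = {u \<in> V. E v u}"

definition no_isolated :: "'a set \<Rightarrow> ('a \<Rightarrow> 'a \<Rightarrow> bool) \<Rightarrow> bool" where
  "no_isolated V E \<longleftrightarrow> (\<forall>v\<in>V. \<exists>u\<in>V. E v u)"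

definition open_packing :: "'a set \<Rightarrow> ('a \<Rightarrow> 'a \<Rightarrow> bool) \<Rightarrow> 'a set \<Rightarrow> bool" where
  "open_packing V E D \<longleftrightarrow> D \<subseteq> V \<and>
     (\<forall>u\<in>D. \<forall>v\<in>D. u \<noteq> v \<longrightarrow> open_nbhd V E u \<inter> open_nbhd V E v = {})"

definition open_packing_number :: "'a set \<Rightarrow> ('a \<Rightarrow> 'a \<Rightarrow> bool) \<Rightarrow> nat" where
  "open_packing_number V E = Max (card ` {D. open_packing V E D})"

definition total_dominating :: "'a set \<Rightarrow> ('a \<Rightarrow> 'a \<Rightarrow> bool) \<Rightarrow> 'a set \<Rightarrow> bool" where
  "total_dominating V E D \<longleftrightarrow> D \<subseteq> V \<and> (\<forall>v\<in>V. \<exists>u\<in>D. E v u)"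

definition efficient_open_domination_graph :: "'a set \<Rightarrow> ('a \<Rightarrow> 'a \<Rightarrow> bool) \<Rightarrow> bool" where
  "efficient_open_domination_graph V E \<longleftrightarrow>
     (\<exists>D. total_dominating V E D \<and> open_packing V E D)"

definition total_roman_dom_fun :: "'a set \<Rightarrow> ('a \<Rightarrow> 'a \<Rightarrow> bool) \<Rightarrow> ('a \<Rightarrow> nat) \<Rightarrow> bool" where
  "total_roman_dom_fun V E f \<longleftrightarrow>
     (\<forall>v\<in>V. f v \<in> {0,1,2}) \<and>
     (\<forall>v\<in>V. f v = 0 \<longrightarrow> (\<exists>u\<in>V. E v u \<and> f u = 2)) \<and>
     (\<forall>v\<in>V. f v > 0 \<longrightarrow> (\<exists>u\<in>V. E v u \<and> f u > 0))"

definition total_roman_dom_number :: "'a set \<Rightarrow> ('a \<Rightarrow> 'a \<Rightarrow> bool) \<Rightarrow> nat" where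
  "total_roman_dom_number V E =
     Min {(\<Sum>v\<in>V. f v) | f. total_roman_dom_fun V E f}"

definition direct_prod_edges ::
  "('a \<Rightarrow> 'a \<Rightarrow> bool) \<Rightarrow> ('b \<Rightarrow> 'b \<Rightarrow> bool) \<Rightarrow> ('a \<times> 'b) \<Rightarrow> ('a \<times> 'b) \<Rightarrow> bool" where
  "direct_prod_edges E F x y \<longleftrightarrow> E (fst x) (fst y) \<and> F (snd x) (snd y)"

end

theory Submission
  imports Defs
begin

lemma packing_le:
  assumes "simple_graph V E" "open_packing V E D"
  shows "card D \<le> open_packing_number V E"
proof -
  have fin: "finite V" using assms(1) by (simp add: simple_graph_def)
  have "{D. open_packing V E D} \<subseteq> Pow V" by (auto simp: open_packing_def)
  hence "finite {D. open_packing V E D}" using fin by (meson finite_Pow_iff finite_subset)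
  hence "finite (card ` {D. open_packing V E D})" by simp
  thus ?thesis unfolding open_packing_number_def using assms(2) by (simp add: Max_ge)
qed

theorem corollary2p5:
  fixes V :: "'a set" and E :: "'a \<Rightarrow> 'a \<Rightarrow> bool"
    and W :: "'b set" and F :: "'b \<Rightarrow> 'b \<Rightarrow> bool"
  assumes "simple_graph V E" and "simple_graph W F"
    and "no_isolated V E" and "no_isolated W F"
    and "efficient_open_domination_graph V E"
    and "efficient_open_domination_graph W F"
  shows "total_roman_dom_number (V \<times> W) (direct_prod_edges E F)
           \<le> 2 * open_packing_number V E * open_packing_number W F"
proof -
  obtain D where D: "total_dominating V E D" "open_packing V E D"
    using assms(5) efficient_open_domination_graph_def by blast
  obtain D' where D': "total_dominating W F D'" "open_packing W F D'"
    using assms(6) efficient_open_domination_graph_def by blast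
  have finV: "finite V" using assms(1) by (simp add: simple_graph_def)
  have finW: "finite W" using assms(2) by (simp add: simple_graph_def)
  have DV: "D \<subseteq> V" and DW: "D' \<subseteq> W" using D D' by (auto simp: total_dominating_def)
  define f :: "'a \<times> 'b \<Rightarrow> nat" where "f = (\<lambda>p. if p \<in> D \<times> D' then 2 else 0)"
  have trdf: "total_roman_dom_fun (V \<times> W) (direct_prod_edges E F) f"
    unfolding total_roman_dom_fun_def
  proof (intro conjI ballI impI)
    fix p assume "p \<in> V \<times> W"
    then obtain x y where p: "p = (x,y)" "x \<in> V" "y \<in> W" by auto
    obtain u where u: "u \<in> D" "E x u" using D(1) p(2) by (auto simp: total_dominating_def)
    obtain v where v: "v \<in> D'" "F y v" using D'(1) p(3) by (auto simp: total_dominating_def)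
    have uv: "(u,v) \<in> V \<times> W" "direct_prod_edges E F p (u,v)" "f (u,v) = 2"
      using u v DV DW p by (auto simp: direct_prod_edges_def f_def)
    show "f p \<in> {0,1,2}" by (simp add: f_def)
    show "\<exists>q\<in>V \<times> W. direct_prod_edges E F p q \<and> f q = 2" using uv by blast
    show "\<exists>q\<in>V \<times> W. direct_prod_edges E F p q \<and> f q > 0" using uv by force
  qed
  have sumf: "(\<Sum>p\<in>V \<times> W. f p) = 2 * card (D \<times> D')"
  proof -
    have "(\<Sum>p\<in>V \<times> W. f p) = (\<Sum>p\<in>D \<times> D'. 2)"
      unfolding f_def
      by (rule sum.mono_neutral_cong_right) (use finV finW DV DW in auto)
    thus ?thesis by simp
  qed
  let ?S = "{(\<Sum>v\<in>V \<times> W. g v) | g. total_roman_dom_fun (V \<times> W) (direct_prod_edges E F) g}"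
  have "?S \<subseteq> {..2 * card (V \<times> W)}"
  proof
    fix s assume "s \<in> ?S"
    then obtain g where g: "s = (\<Sum>v\<in>V \<times> W. g v)" "total_roman_dom_fun (V \<times> W) (direct_prod_edges E F) g" by blast
    have "\<forall>v\<in>V \<times> W. g v \<le> 2" using g(2) unfolding total_roman_dom_fun_def by fastforce
    hence "(\<Sum>v\<in>V \<times> W. g v) \<le> (\<Sum>v\<in>V \<times> W. 2)" by (intro sum_mono) blast
    thus "s \<in> {..2 * card (V \<times> W)}" using g(1) by simp
  qed
  hence finS: "finite ?S" by (rule finite_subset) simp
  have "total_roman_dom_number (V \<times> W) (direct_prod_edges E F) \<le> (\<Sum>p\<in>V \<times> W. f p)"
    unfolding total_roman_dom_number_def using finS trdf by (intro Min_le) blast+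
  also have "\<dots> = 2 * (card D * card D')" by (simp add: sumf card_cartesian_product)
  also have "\<dots> \<le> 2 * (open_packing_number V E * open_packing_number W F)"
    using packing_le[OF assms(1) D(2)] packing_le[OF assms(2) D'(2)] by (simp add: mult_mono)
  finally show ?thesis by simp
qed

end
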